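(* Let $n\in\mathbb{Z}$ with $|n|\geq1$, $\alpha>0$, $R>0$ and $\kappa<\alpha^{-1}-\frac{r_0^2+n^2}{2R^2}$. Let $\{u_j\}_{j=1}^\infty$ be a sequence in $\mathcal{M}$ such that $\{\mathcal{I}_\kappa(u_j)\}$ is bounded. Then $\{u_j\}$ is bounded in $H$.
   Context: $r_0\approx2.404825$ is the first positive zero of the Bessel function $J_0$. $H$ is the completion of $\{u\in C^1[0,R]: u(0)=0=u(R)\}$ with respect to the inner product $(u,\tilde u)=\int_0^R\{ru_r\tilde u_r+\frac1r u\tilde u\}dr$. $\mathcal{I}_\kappa(u)=\frac12\int_0^R\{ru_r^2+\frac{n^2}{r}u^2-2(\alpha^{-1}-\kappa)ru^2+2\alpha^{-2}r\ln(1+\alpha u^2)\}dr$, $\gamma_\kappa(u)=\frac12\int_0^R\{ru_r^2+\frac{n^2}{r}u^2-2(\alpha^{-1}-\kappa)ru^2+2\alpha^{-1}\frac{ru^2}{1+\alpha u^2}\}dr$, and $\mathcal{M}=\{u\in H\setminus\{0\}:\gamma_\kappa(u)=0\}$. *)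

theory Defs
  imports "HOL-Analysis.Analysis"
begin

definition besselJ0 :: "real \<Rightarrow> real" where
  "besselJ0 x = (\<Sum>k. (-1)^k / (fact k)^2 * (x/2)^(2*k))"

definition r0 :: real where
  "r0 = Inf {x. x > 0 \<and> besselJ0 x = 0}"

text \<open>Elements of H are represented by pairs (u, u') of a function and its (weak) derivative,
  lying in the closure of C^1 functions vanishing at 0 and R with respect to the norm
  (int_0^R r u'^2 + u^2/r dr)^(1/2).  This realises the completion concretely inside the
  (complete) weighted L^2 space.\<close>
definition Hintegrand :: "(real \<Rightarrow> real) \<Rightarrow> (real \<Rightarrow> real) \<Rightarrow> real \<Rightarrow> real" where
  "Hintegrand u u' r = r * (u' r)^2 + (u r)^2 / r"

definition H_norm_sq :: "real \<Rightarrow> (real \<Rightarrow> real) \<times> (real \<Rightarrow> real) \<Rightarrow> real" where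
  "H_norm_sq R w = (LINT r:{0<..<R}|lborel. Hintegrand (fst w) (snd w) r)"

definition C1_test :: "real \<Rightarrow> (real \<Rightarrow> real) \<Rightarrow> (real \<Rightarrow> real) \<Rightarrow> bool" where
  "C1_test R \<phi> \<phi>' \<longleftrightarrow>
     (\<forall>x\<in>{0..R}. (\<phi> has_real_derivative \<phi>' x) (at x within {0..R}))
     \<and> continuous_on {0..R} \<phi>' \<and> \<phi> 0 = 0 \<and> \<phi> R = 0"

definition inH :: "real \<Rightarrow> (real \<Rightarrow> real) \<times> (real \<Rightarrow> real) \<Rightarrow> bool" where
  "inH R w \<longleftrightarrow>
     fst w \<in> borel_measurable lborel \<and> snd w \<in> borel_measurable lborel \<and>
     set_integrable lborel {0<..<R} (Hintegrand (fst w) (snd w)) \<and>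
     (\<exists>\<phi> \<phi>' :: nat \<Rightarrow> real \<Rightarrow> real.
        (\<forall>k. C1_test R (\<phi> k) (\<phi>' k)) \<and>
        (\<forall>k. set_integrable lborel {0<..<R}
               (Hintegrand (\<lambda>r. \<phi> k r - fst w r) (\<lambda>r. \<phi>' k r - snd w r))) \<and>
        (\<lambda>k. LINT r:{0<..<R}|lborel.
               Hintegrand (\<lambda>r. \<phi> k r - fst w r) (\<lambda>r. \<phi>' k r - snd w r) r)
          \<longlonglongrightarrow> 0)"

definition I_kappa :: "int \<Rightarrow> real \<Rightarrow> real \<Rightarrow> real \<Rightarrow> (real \<Rightarrow> real) \<times> (real \<Rightarrow> real) \<Rightarrow> real" where
  "I_kappa n \<alpha> R \<kappa> w = 1/2 * (LINT r:{0<..<R}|lborel.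
      r * (snd w r)^2 + (real_of_int n)^2 / r * (fst w r)^2
      - 2 * (1/\<alpha> - \<kappa>) * r * (fst w r)^2
      + 2 * (1/\<alpha>^2) * r * ln (1 + \<alpha> * (fst w r)^2))"

definition gamma_kappa :: "int \<Rightarrow> real \<Rightarrow> real \<Rightarrow> real \<Rightarrow> (real \<Rightarrow> real) \<times> (real \<Rightarrow> real) \<Rightarrow> real" where
  "gamma_kappa n \<alpha> R \<kappa> w = 1/2 * (LINT r:{0<..<R}|lborel.
      r * (snd w r)^2 + (real_of_int n)^2 / r * (fst w r)^2
      - 2 * (1/\<alpha> - \<kappa>) * r * (fst w r)^2
      + 2 * (1/\<alpha>) * (r * (fst w r)^2 / (1 + \<alpha> * (fst w r)^2)))"

definition Mset :: "int \<Rightarrow> real \<Rightarrow> real \<Rightarrow> real \<Rightarrow> ((real \<Rightarrow> real) \<times> (real \<Rightarrow> real)) set" where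
  "Mset n \<alpha> R \<kappa> = {w. inH R w \<and> H_norm_sq R w \<noteq> 0 \<and> gamma_kappa n \<alpha> R \<kappa> w = 0}"

end

theory Submission
  imports Defs
begin

lemma sq2: fixes q b :: real shows "q^2 \<le> 2*b^2 + 2*(q-b)^2"
proof -
  have "0 \<le> (q-2*b)^2" by simp
  then show ?thesis by (simp add: power2_eq_square algebra_simps)
qed

lemma h1:
  fixes p q a b r :: real assumes r: "r > 0"
  shows "2*p*q \<le> 2*(r*b^2 + a^2/r) + 2*(r*(q-b)^2 + (p-a)^2/r)"
proof -
  have "2*p*q*r \<le> r*(r*q^2) + p^2" using sum_squares_ge_zero[of "r*q-p" 0]
    by (simp add: power2_eq_square algebra_simps)
  then have e1: "2*p*q \<le> r*q^2 + p^2/r" using r by (simp add: field_simps)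
  have "r*q^2 \<le> r*(2*b^2 + 2*(q-b)^2)" using r sq2[of q b] by simp
  moreover have "p^2/r \<le> (2*a^2 + 2*(p-a)^2)/r" using r sq2[of p a] by (simp add: divide_right_mono)
  moreover have "r*(2*b^2+2*(q-b)^2) + (2*a^2+2*(p-a)^2)/r = 2*(r*b^2 + a^2/r) + 2*(r*(q-b)^2 + (p-a)^2/r)"
    by (simp add: algebra_simps add_divide_distrib)
  ultimately show ?thesis using e1 by linarith
qed

lemma h2: fixes r R a :: real assumes "0 < r" "r \<le> R" shows "r*a^2 \<le> R^2*(a^2/r)"
proof -
  have "r*a^2 = r^2*(a^2/r)" using assms by (simp add: power2_eq_square field_simps)
  also have "\<dots> \<le> R^2*(a^2/r)" using assms by (intro mult_right_mono power_mono) auto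
  finally show ?thesis .
qed

lemma h3: fixes x y :: real assumes "0 \<le> x" "0 \<le> y" shows "x/(1+y) \<le> x"
proof -
  have "x/(1+y) \<le> x/1" using assms by (intro divide_left_mono) auto
  then show ?thesis by simp
qed

lemma h4: fixes s :: real assumes "0 \<le> s" shows "s/(1+s) \<le> ln (1+s)" "ln (1+s) \<le> s" "0 \<le> ln(1+s)"
proof -
  have "ln (1/(1+s)) \<le> 1/(1+s) - 1" using assms by (intro ln_le_minus_one) auto
  then show "s/(1+s) \<le> ln (1+s)" using assms by (simp add: ln_div field_simps)
  show "ln (1+s) \<le> s" using ln_le_minus_one[of "1+s"] assms by simp
  show "0 \<le> ln(1+s)" using assms by simp
qed

lemma const_int: assumes "R>0" shows "set_integrable lborel {0<..<R} (\<lambda>_. c::real)"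
  "(LINT r:{0<..<R}|lborel. c) = R * c"
proof -
  show "set_integrable lborel {0<..<R} (\<lambda>_. c::real)"
  proof -
    have "integrable lborel (indicat_real {0<..<R})"
      by (rule integrable_real_indicator) (use assms in auto)
    then have "integrable lborel (\<lambda>x. indicat_real {0<..<R} x * c)" by simp
    then show ?thesis unfolding set_integrable_def by simp
  qed
  show "(LINT r:{0<..<R}|lborel. c) = R * c"
    using assms by (subst set_integral_const) auto
qed

lemma si_bound:
  fixes f g :: "real \<Rightarrow> real"
  assumes "set_integrable lborel A f" "g \<in> borel_measurable lborel" "A \<in> sets lborel"
    "\<And>x. x\<in>A \<Longrightarrow> \<bar>g x\<bar> \<le> f x"
  shows "set_integrable lborel A g"
proof (rule set_integrable_bound[OF assms(1)])
  show "set_borel_measurable lborel A g" unfolding set_borel_measurable_def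
    using assms(2,3) by measurable
  show "AE x in lborel. x \<in> A \<longrightarrow> norm (g x) \<le> norm (f x)"
    using assms(4) by (auto intro!: AE_I2) (smt (verit) real_norm_def)
qed

lemma sint_nonneg: "(\<And>x. x\<in>A \<Longrightarrow> 0 \<le> f x) \<Longrightarrow> 0 \<le> (LINT x:A|M. (f x::real))"
  unfolding set_lebesgue_integral_def
  by (auto intro!: Bochner_Integration.integral_nonneg simp: indicator_def)

lemma lin4:
  fixes f1 f2 f3 f4 :: "real \<Rightarrow> real"
  assumes "set_integrable M A f1" "set_integrable M A f2" "set_integrable M A f3" "set_integrable M A f4"
  shows "(LINT x:A|M. f1 x + f2 x - a * f3 x + b * f4 x) = 
     (LINT x:A|M. f1 x) + (LINT x:A|M. f2 x) - a * (LINT x:A|M. f3 x) + b * (LINT x:A|M. f4 x)"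
  using assms by (simp add: set_integral_add set_integral_diff set_integrable_mult_right)
lemma sup_lemma:
  fixes \<phi> \<phi>' F :: "real \<Rightarrow> real"
  assumes d: "\<forall>y\<in>{0..R}. (\<phi> has_real_derivative \<phi>' y) (at y within {0..R})" and z: "\<phi> 0 = 0"
    and F: "set_integrable lborel {0<..<R} F"
    and le: "\<And>r. r\<in>{0<..<R} \<Longrightarrow> 2*\<phi> r*\<phi>' r \<le> F r"
    and nn: "\<And>r. r\<in>{0<..<R} \<Longrightarrow> 0 \<le> F r" and x: "x\<in>{0<..<R}"
  shows "(\<phi> x)^2 \<le> (LINT r:{0<..<R}|lborel. F r)"
proof -
  have "((\<lambda>r. 2*\<phi> r*\<phi>' r) has_integral (\<phi> x^2 - \<phi> 0^2)) {0..x}"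
  proof (rule fundamental_theorem_of_calculus)
    show "0 \<le> x" using x by simp
    fix y assume y: "y \<in> {0..x}"
    then have yR: "y \<in> {0..R}" using x by auto
    have sub: "{0..x} \<subseteq> {0..R}" using x by auto
    have dy: "(\<phi> has_real_derivative \<phi>' y) (at y within {0..x})"
      by (rule DERIV_subset[OF d[rule_format, OF yR] sub])
    have "((\<lambda>r. \<phi> r * \<phi> r) has_real_derivative (\<phi>' y * \<phi> y + \<phi>' y * \<phi> y)) (at y within {0..x})"
      by (rule DERIV_mult[OF dy dy])
    then have "((\<lambda>r. \<phi> r ^2) has_real_derivative (2*\<phi> y*\<phi>' y)) (at y within {0..x})"
      by (simp add: power2_eq_square algebra_simps)
    then show "((\<lambda>r. \<phi> r ^2) has_vector_derivative (2*\<phi> y*\<phi>' y)) (at y within {0..x})"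
      by (simp add: has_real_derivative_iff_has_vector_derivative)
  qed
  then have hi: "((\<lambda>r. 2*\<phi> r*\<phi>' r) has_integral (\<phi> x^2)) {0<..<x}"
    using z by (simp add: has_integral_Icc_iff_Ioo)
  have Fx: "set_integrable lborel {0<..<x} F"
    using x by (intro set_integrable_subset[OF F]) auto
  have "\<phi> x^2 = integral {0<..<x} (\<lambda>r. 2*\<phi> r*\<phi>' r)" using hi by (simp add: integral_unique)
  also have "\<dots> \<le> integral {0<..<x} F"
  proof (rule integral_le)
    show "(\<lambda>r. 2*\<phi> r*\<phi>' r) integrable_on {0<..<x}" using hi by blast
    show "F integrable_on {0<..<x}" by (rule set_borel_integral_eq_integral(1)[OF Fx])
    fix r assume "r \<in> {0<..<x}" then show "2*\<phi> r*\<phi>' r \<le> F r" using x le by simp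
  qed
  also have "\<dots> \<le> integral {0<..<R} F"
  proof (rule integral_subset_le)
    show "{0<..<x} \<subseteq> {0<..<R}" using x by auto
  qed (use set_borel_integral_eq_integral(1)[OF Fx] set_borel_integral_eq_integral(1)[OF F] nn in auto)
  also have "\<dots> = (LINT r:{0<..<R}|lborel. F r)"
    using set_borel_integral_eq_integral(2)[OF F] by simp
  finally show ?thesis .
qed


lemma key:
  fixes n :: int and \<alpha> R \<kappa> C :: real and w :: "(real \<Rightarrow> real) \<times> (real \<Rightarrow> real)"
  assumes n1: "\<bar>n\<bar> \<ge> 1" and a: "\<alpha> > 0" and R: "R > 0"
    and wM: "w \<in> Mset n \<alpha> R \<kappa>" and IC: "I_kappa n \<alpha> R \<kappa> w \<le> C" and C0: "0 \<le> C"
  shows "H_norm_sq R w \<le> 4*\<bar>1/\<alpha> - \<kappa>\<bar>*(R^2*((exp(16*\<bar>1/\<alpha> - \<kappa>\<bar>*(\<alpha>^2*C)+2)-1)/\<alpha>) + 4*(\<alpha>^2*C) + 2*R^2)"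
proof -
  define c where "c = \<bar>1/\<alpha> - \<kappa>\<bar>"
  define K where "K = \<alpha>^2*C"
  define M where "M = (exp(16*c*K+2)-1)/\<alpha>"
  obtain u v where wuv: "w = (u,v)" by (cases w)
  have inH: "inH R (u,v)" and g0: "gamma_kappa n \<alpha> R \<kappa> (u,v) = 0" using wM wuv by (auto simp: Mset_def)
  have IC': "I_kappa n \<alpha> R \<kappa> (u,v) \<le> C" using IC wuv by simp
  from inH have mu[measurable]: "u \<in> borel_measurable lborel" and mv[measurable]: "v \<in> borel_measurable lborel"
    and hint: "set_integrable lborel {0<..<R} (\<lambda>r. r*(v r)^2 + (u r)^2/r)"
    unfolding inH_def Hintegrand_def by auto
  from inH obtain \<phi> \<phi>' :: "nat \<Rightarrow> real \<Rightarrow> real" where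
    C1: "\<And>k. C1_test R (\<phi> k) (\<phi>' k)" and
    hdi: "\<And>k. set_integrable lborel {0<..<R} (Hintegrand (\<lambda>r. \<phi> k r - u r) (\<lambda>r. \<phi>' k r - v r))" and
    lim: "(\<lambda>k. LINT r:{0<..<R}|lborel. Hintegrand (\<lambda>r. \<phi> k r - u r) (\<lambda>r. \<phi>' k r - v r) r) \<longlonglongrightarrow> 0"
    unfolding inH_def by auto
  have Iset: "{0<..<R} \<in> sets lborel" by simp
  have c0: "0 \<le> c" by (simp add: c_def)
  have K0: "0 \<le> K" using C0 by (simp add: K_def)

  define P where "P = (\<lambda>r. r*(v r)^2)"
  define Q where "Q = (\<lambda>r. (u r)^2/r)"
  define Qn where "Qn = (\<lambda>r. (real_of_int n)^2/r*(u r)^2)"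
  define T where "T = (\<lambda>r. r*(u r)^2)"
  define Z where "Z = (\<lambda>r. r*(u r)^2/(1+\<alpha>*(u r)^2))"
  define L where "L = (\<lambda>r. r*ln(1+\<alpha>*(u r)^2))"
  define G where "G = (\<lambda>r. L r - \<alpha> * Z r)"
  have iP: "set_integrable lborel {0<..<R} P"
    by (rule si_bound[OF hint _ Iset]) (auto simp: P_def)
  have iQ: "set_integrable lborel {0<..<R} Q"
    by (rule si_bound[OF hint _ Iset]) (auto simp: Q_def)
  have iQn: "set_integrable lborel {0<..<R} Qn"
  proof (rule si_bound[OF _ _ Iset])
    show "set_integrable lborel {0<..<R} (\<lambda>r. (real_of_int n)^2 * Q r)" using iQ by simp
  qed (auto simp: Qn_def Q_def)
  have iT: "set_integrable lborel {0<..<R} T"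
  proof (rule si_bound[OF _ _ Iset])
    show "set_integrable lborel {0<..<R} (\<lambda>r. R^2 * Q r)" using iQ by simp
    fix r assume "r \<in> {0<..<R}"
    then show "\<bar>T r\<bar> \<le> R^2 * Q r" using h2[of r R "u r"] by (simp add: T_def Q_def)
  qed (auto simp: T_def)
  have Z0: "\<And>r. r \<in> {0<..<R} \<Longrightarrow> 0 \<le> Z r" using a by (simp add: Z_def)
  have iZ: "set_integrable lborel {0<..<R} Z"
  proof (rule si_bound[OF iT _ Iset])
    fix r assume r: "r \<in> {0<..<R}"
    then show "\<bar>Z r\<bar> \<le> T r" using Z0[OF r] h3[of "r*(u r)^2" "\<alpha>*(u r)^2"] a
      by (simp add: Z_def T_def)
  qed (auto simp: Z_def)
  have iL: "set_integrable lborel {0<..<R} L"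
  proof (rule si_bound[OF _ _ Iset])
    show "set_integrable lborel {0<..<R} (\<lambda>r. \<alpha> * T r)" using iT by simp
    fix r assume r: "r \<in> {0<..<R}"
    have "0 \<le> \<alpha>*(u r)^2" using a by simp
    then have "0 \<le> ln(1+\<alpha>*(u r)^2)" "ln(1+\<alpha>*(u r)^2) \<le> \<alpha>*(u r)^2" using h4 by auto
    then show "\<bar>L r\<bar> \<le> \<alpha> * T r" using r
      by (auto simp: L_def T_def mult_left_mono abs_mult)
  qed (auto simp: L_def)
  have G0: "\<And>r. r \<in> {0<..<R} \<Longrightarrow> 0 \<le> G r"
  proof -
    fix r assume r: "r \<in> {0<..<R}"
    have s: "0 \<le> \<alpha>*(u r)^2" using a by simp
    have "\<alpha>*Z r = r*((\<alpha>*(u r)^2)/(1+\<alpha>*(u r)^2))" by (simp add: Z_def)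
    also have "\<dots> \<le> r*ln(1+\<alpha>*(u r)^2)" using h4(1)[OF s] r by (intro mult_left_mono) auto
    finally show "0 \<le> G r" by (simp add: G_def L_def)
  qed
  have iG: "set_integrable lborel {0<..<R} G"
    unfolding G_def using iL iZ by (intro set_integral_diff(1)) auto
  have LG: "(LINT r:{0<..<R}|lborel. G r) = (LINT r:{0<..<R}|lborel. L r) - \<alpha> * (LINT r:{0<..<R}|lborel. Z r)"
    unfolding G_def using iL iZ by (subst set_integral_diff(2)) auto

  have gam: "gamma_kappa n \<alpha> R \<kappa> (u,v) = 1/2 * (LINT r:{0<..<R}|lborel. P r + Qn r - (2*(1/\<alpha>-\<kappa>)) * T r + (2*(1/\<alpha>)) * Z r)"
    unfolding gamma_kappa_def fst_conv snd_conv
    by (rule arg_cong[where f="\<lambda>x. 1/2*x"], rule set_lebesgue_integral_cong)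
       (auto simp: P_def Qn_def T_def Z_def)
  have Ik: "I_kappa n \<alpha> R \<kappa> (u,v) = 1/2 * (LINT r:{0<..<R}|lborel. P r + Qn r - (2*(1/\<alpha>-\<kappa>)) * T r + (2*(1/\<alpha>^2)) * L r)"
    unfolding I_kappa_def fst_conv snd_conv
    by (rule arg_cong[where f="\<lambda>x. 1/2*x"], rule set_lebesgue_integral_cong)
       (auto simp: P_def Qn_def T_def L_def)
  define LP where "LP = (LINT r:{0<..<R}|lborel. P r)"
  define LQ where "LQ = (LINT r:{0<..<R}|lborel. Q r)"
  define LQn where "LQn = (LINT r:{0<..<R}|lborel. Qn r)"
  define LT where "LT = (LINT r:{0<..<R}|lborel. T r)"
  define LZ where "LZ = (LINT r:{0<..<R}|lborel. Z r)"
  define LL where "LL = (LINT r:{0<..<R}|lborel. L r)"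
  define LGv where "LGv = (LINT r:{0<..<R}|lborel. G r)"
  have gam2: "LP + LQn - (2*(1/\<alpha>-\<kappa>))*LT + (2*(1/\<alpha>))*LZ = 0"
    using g0 unfolding gam lin4[OF iP iQn iT iZ] LP_def LQn_def LT_def LZ_def by simp
  have Ik2: "1/2*(LP + LQn - (2*(1/\<alpha>-\<kappa>))*LT + (2*(1/\<alpha>^2))*LL) \<le> C"
    using IC' unfolding Ik lin4[OF iP iQn iT iL] LP_def LQn_def LT_def LL_def by simp
  define X where "X = LP + LQn - (2*(1/\<alpha>-\<kappa>))*LT + (2*(1/\<alpha>^2))*LL"
  define Y where "Y = LP + LQn - (2*(1/\<alpha>-\<kappa>))*LT + (2*(1/\<alpha>))*LZ"
  have "(1/\<alpha>^2)*LL - (1/\<alpha>)*LZ = 1/2*X - 1/2*Y"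
    unfolding X_def Y_def by (simp add: algebra_simps)
  moreover have "Y = 0" "1/2*X \<le> C" using gam2 Ik2 unfolding X_def Y_def by auto
  ultimately have "(1/\<alpha>^2)*LL - (1/\<alpha>)*LZ \<le> C" by linarith
  then have "\<alpha>^2*((1/\<alpha>^2)*LL - (1/\<alpha>)*LZ) \<le> \<alpha>^2*C" using a by (intro mult_left_mono) auto
  moreover have "\<alpha>^2*((1/\<alpha>^2)*LL - (1/\<alpha>)*LZ) = LL - \<alpha>*LZ"
    using a by (simp add: field_simps power2_eq_square)
  ultimately have LGK: "LGv \<le> K" unfolding LGv_def LG K_def LL_def[symmetric] LZ_def[symmetric]
    by simp
  have LZ0: "0 \<le> LZ" unfolding LZ_def using Z0 by (rule sint_nonneg)
  have LT0: "0 \<le> LT" unfolding LT_def by (rule sint_nonneg) (simp add: T_def)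
  have A: "LP + LQn \<le> 2*c*LT"
  proof -
    have "LP + LQn = (2*(1/\<alpha>-\<kappa>))*LT - (2*(1/\<alpha>))*LZ" using gam2 by simp
    also have "\<dots> \<le> (2*(1/\<alpha>-\<kappa>))*LT" using LZ0 a by simp
    also have "\<dots> \<le> 2*c*LT" using LT0 unfolding c_def
      using abs_ge_self[of "1/\<alpha>-\<kappa>"] by (intro mult_right_mono) auto
    finally show ?thesis .
  qed
  have Nsplit: "H_norm_sq R (u,v) = LP + LQ"
    unfolding H_norm_sq_def Hintegrand_def fst_conv snd_conv LP_def LQ_def P_def Q_def
    using iP iQ unfolding P_def Q_def by (rule set_integral_add(2))
  have "LQ \<le> LQn" unfolding LQ_def LQn_def
  proof (rule set_integral_mono[OF iQ iQn])
    fix r :: real assume r: "r \<in> {0<..<R}"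
    have h: "1 \<le> \<bar>real_of_int n\<bar>" using n1 by (metis of_int_1_le_iff of_int_abs)
    have "1 \<le> \<bar>real_of_int n\<bar>^2" using h by (rule one_le_power)
    then have "1 \<le> (real_of_int n)^2" by simp
    then have "1 * ((u r)^2/r) \<le> (real_of_int n)^2 * ((u r)^2/r)" using r by (intro mult_right_mono) auto
    then show "Q r \<le> Qn r" by (simp add: Q_def Qn_def)
  qed
  then have NA: "H_norm_sq R (u,v) \<le> 2*c*LT" using Nsplit A by simp
  define N where "N = H_norm_sq R (u,v)"
  have N0: "0 \<le> N" unfolding N_def H_norm_sq_def fst_conv snd_conv Hintegrand_def
    by (rule sint_nonneg) auto
  have NA': "N \<le> 2*c*LT" using NA by (simp add: N_def)
  obtain k0 where k0: "\<forall>k\<ge>k0. norm ((LINT r:{0<..<R}|lborel. Hintegrand (\<lambda>r. \<phi> k r - u r) (\<lambda>r. \<phi>' k r - v r) r) - 0) < 1"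
    using lim unfolding LIMSEQ_iff by (meson zero_less_one)
  define k where "k = k0"
  define Hd where "Hd = Hintegrand (\<lambda>r. \<phi> k r - u r) (\<lambda>r. \<phi>' k r - v r)"
  define E where "E = (LINT r:{0<..<R}|lborel. Hd r)"
  have iHd: "set_integrable lborel {0<..<R} Hd" unfolding Hd_def by (rule hdi)
  have Hd0: "\<And>r. r \<in> {0<..<R} \<Longrightarrow> 0 \<le> Hd r" by (simp add: Hd_def Hintegrand_def)
  have E1: "E \<le> 1" using k0[rule_format, of k] unfolding E_def Hd_def k_def by simp
  have Nint: "N = (LINT r:{0<..<R}|lborel. r*(v r)^2 + (u r)^2/r)"
    by (simp add: N_def H_norm_sq_def Hintegrand_def)
  have sup: "\<And>x. x \<in> {0<..<R} \<Longrightarrow> (\<phi> k x)^2 \<le> 2*N + 2"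
  proof -
    fix x :: real assume x: "x \<in> {0<..<R}"
    from C1[of k] have d: "\<forall>y\<in>{0..R}. (\<phi> k has_real_derivative \<phi>' k y) (at y within {0..R})"
      and z: "\<phi> k 0 = 0" unfolding C1_test_def by auto
    define F where "F = (\<lambda>r. 2*(r*(v r)^2 + (u r)^2/r) + 2*Hd r)"
    have i1: "set_integrable lborel {0<..<R} (\<lambda>r. 2*(r*(v r)^2 + (u r)^2/r))"
      using hint by (rule set_integrable_mult_right)
    have i2: "set_integrable lborel {0<..<R} (\<lambda>r. 2*Hd r)"
      using iHd by (rule set_integrable_mult_right)
    have iF: "set_integrable lborel {0<..<R} F" unfolding F_def using i1 i2 by (rule set_integral_add(1))
    have LF: "(LINT r:{0<..<R}|lborel. F r) = 2*N + 2*E"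
      unfolding F_def set_integral_add(2)[OF i1 i2] set_integral_mult_right Nint E_def ..
    have "(\<phi> k x)^2 \<le> (LINT r:{0<..<R}|lborel. F r)"
    proof (rule sup_lemma[OF d z iF _ _ x])
      fix r :: real assume r: "r \<in> {0<..<R}"
      show "2 * \<phi> k r * \<phi>' k r \<le> F r"
        using h1[of r "\<phi> k r" "\<phi>' k r" "v r" "u r"] r
        by (simp add: F_def Hd_def Hintegrand_def)
      show "0 \<le> F r" using r Hd0[OF r] by (simp add: F_def)
    qed
    then show "(\<phi> k x)^2 \<le> 2*N + 2" using LF E1 by linarith
  qed
  define D where "D = (4*N+4)/(16*c*K+1)"
  have pos: "0 < 16*c*K+1" using c0 K0 by (simp add: add_nonneg_pos)
  have D0: "0 \<le> D" using N0 pos by (simp add: D_def)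
  have expM: "1 + \<alpha>*M = exp(16*c*K+2)" using a by (simp add: M_def)
  have "0 \<le> 16*c*K+2" using c0 K0 by simp
  then have "1 \<le> exp(16*c*K+2)" by simp
  then have M0: "0 \<le> M" using a unfolding M_def by (intro divide_nonneg_pos) auto
  have pw: "\<And>r. r \<in> {0<..<R} \<Longrightarrow> T r \<le> R*M + D*G r + 2*R^2*Hd r"
  proof -
    fix r :: real assume r: "r \<in> {0<..<R}"
    have DG: "0 \<le> D*G r" using D0 G0[OF r] by simp
    have H2: "0 \<le> 2*R^2*Hd r" using Hd0[OF r] by simp
    show "T r \<le> R*M + D*G r + 2*R^2*Hd r"
    proof (cases "(u r)^2 \<le> M")
      case True
      have "T r \<le> R*M" unfolding T_def using r True by (intro mult_mono) auto
      then show ?thesis using DG H2 by linarith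
    next
      case False
      have "(u r)^2 \<le> 2*(\<phi> k r)^2 + 2*(u r - \<phi> k r)^2" by (rule sq2)
      moreover have "(u r - \<phi> k r)^2 = (\<phi> k r - u r)^2" by (simp add: power2_commute)
      ultimately have "r*(u r)^2 \<le> r*(2*(\<phi> k r)^2 + 2*(\<phi> k r - u r)^2)" using r by (intro mult_left_mono) auto
      then have e1: "T r \<le> 2*(r*(\<phi> k r)^2) + 2*(r*(\<phi> k r - u r)^2)" by (simp add: T_def algebra_simps)
      have "r*(\<phi> k r - u r)^2 \<le> R^2*((\<phi> k r - u r)^2/r)" using r by (intro h2) auto
      also have "\<dots> \<le> R^2*Hd r" using r by (intro mult_left_mono) (auto simp: Hd_def Hintegrand_def)
      finally have e2: "r*(\<phi> k r - u r)^2 \<le> R^2*Hd r" .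
      have e3: "r*(\<phi> k r)^2 \<le> r*(2*N+2)" using sup[OF r] r by (intro mult_left_mono) auto
      have s0: "0 \<le> \<alpha>*(u r)^2" using a by simp
      have "\<alpha>*M < \<alpha>*(u r)^2" using False a by simp
      moreover have "0 \<le> \<alpha>*M" using a M0 by simp
      ultimately have "ln(1+\<alpha>*M) \<le> ln(1+\<alpha>*(u r)^2)" using s0 by (subst ln_le_cancel_iff) auto
      then have lnb: "16*c*K+2 \<le> ln(1+\<alpha>*(u r)^2)" using expM by simp
      have "\<alpha>*Z r = r*((\<alpha>*(u r)^2)/(1+\<alpha>*(u r)^2))" by (simp add: Z_def)
      also have "\<dots> \<le> r*1" using r s0 by (intro mult_left_mono) auto
      finally have az: "\<alpha>*Z r \<le> r" by simp
      have "r*(16*c*K+2) \<le> L r" unfolding L_def using lnb r by (intro mult_left_mono) auto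
      then have e4: "r*(16*c*K+1) \<le> G r" using az by (simp add: G_def algebra_simps)
      have e5: "r*(4*N+4) = D*(r*(16*c*K+1))" using pos by (simp add: D_def field_simps)
      have "D*(r*(16*c*K+1)) \<le> D*G r" using e4 D0 by (intro mult_left_mono)
      then have "2*(r*(\<phi> k r)^2) \<le> D*G r" using e3 e5 by (simp add: algebra_simps)
      moreover have "0 \<le> R*M" using R M0 by simp
      ultimately show ?thesis using e1 e2 by linarith
    qed
  qed
  have ic: "set_integrable lborel {0<..<R} (\<lambda>r. R*M)" by (rule const_int(1)[OF R])
  have iDG: "set_integrable lborel {0<..<R} (\<lambda>r. D*G r)" using iG by (rule set_integrable_mult_right)
  have iRH: "set_integrable lborel {0<..<R} (\<lambda>r. 2*R^2*Hd r)" using iHd by (rule set_integrable_mult_right)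
  have i12: "set_integrable lborel {0<..<R} (\<lambda>r. R*M + D*G r)" using ic iDG by (rule set_integral_add(1))
  have "LT \<le> (LINT r:{0<..<R}|lborel. R*M + D*G r + 2*R^2*Hd r)"
    unfolding LT_def using iT set_integral_add(1)[OF i12 iRH] pw by (rule set_integral_mono)
  also have "\<dots> = R*(R*M) + D*LGv + 2*R^2*E"
    unfolding set_integral_add(2)[OF i12 iRH] set_integral_add(2)[OF ic iDG] const_int(2)[OF R]
      set_integral_mult_right LGv_def E_def ..
  finally have LTb: "LT \<le> R*(R*M) + D*LGv + 2*R^2*E" .
  define q where "q = K/(16*c*K+1)"
  have q0: "0 \<le> q" using K0 pos by (simp add: q_def)
  have qK: "q \<le> K" unfolding q_def using K0 pos
    by (simp add: divide_le_eq) (smt (verit) c0 K0 mult_nonneg_nonneg mult_le_cancel_left1)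
  have cq: "16*c*q \<le> 1" unfolding q_def using pos by (simp add: divide_le_eq)
  have "D*LGv \<le> D*K" using LGK D0 by (intro mult_left_mono)
  also have "D*K = (4*N+4)*q" by (simp add: D_def q_def)
  also have "\<dots> = 4*(N*q) + 4*q" by (simp add: algebra_simps)
  also have "\<dots> \<le> 4*(2*c*LT*q) + 4*K" using NA' q0 qK by (intro add_mono mult_left_mono mult_right_mono) auto
  also have "4*(2*c*LT*q) = LT*(16*c*q)/2" by (simp add: algebra_simps)
  also have "\<dots> \<le> LT*1/2" using LT0 cq by (intro divide_right_mono mult_left_mono) auto
  finally have "D*LGv \<le> LT/2 + 4*K" by simp
  moreover have "2*R^2*E \<le> 2*R^2*1" using E1 by (intro mult_left_mono) auto
  ultimately have "LT \<le> 2*(R^2*M + 4*K + 2*R^2)" using LTb by (simp add: power2_eq_square algebra_simps)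
  then have "2*c*LT \<le> 2*c*(2*(R^2*M + 4*K + 2*R^2))" using c0 by (intro mult_left_mono) auto
  then have "N \<le> 4*c*(R^2*M + 4*K + 2*R^2)" using NA' by (simp add: algebra_simps)
  then show ?thesis using wuv unfolding N_def M_def c_def K_def by simp
qed

theorem lemma4p5:
  fixes n :: int and \<alpha> R \<kappa> :: real
    and u :: "nat \<Rightarrow> (real \<Rightarrow> real) \<times> (real \<Rightarrow> real)"
  assumes "\<bar>n\<bar> \<ge> 1" and "\<alpha> > 0" and "R > 0"
    and "\<kappa> < 1/\<alpha> - (r0^2 + (real_of_int n)^2) / (2 * R^2)"
    and "\<forall>j. u j \<in> Mset n \<alpha> R \<kappa>"
    and "\<exists>C. \<forall>j. \<bar>I_kappa n \<alpha> R \<kappa> (u j)\<bar> \<le> C"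
  shows "\<exists>B. \<forall>j. sqrt (H_norm_sq R (u j)) \<le> B"
proof -
  obtain C where C: "\<forall>j. \<bar>I_kappa n \<alpha> R \<kappa> (u j)\<bar> \<le> C" using assms(6) by blast
  have C0: "0 \<le> C" using C by (meson abs_ge_zero order_trans)
  show ?thesis
  proof (intro exI allI)
    fix j
    have "H_norm_sq R (u j) \<le> 4*\<bar>1/\<alpha> - \<kappa>\<bar>*(R^2*((exp(16*\<bar>1/\<alpha> - \<kappa>\<bar>*(\<alpha>^2*C)+2)-1)/\<alpha>) + 4*(\<alpha>^2*C) + 2*R^2)"
      using key[OF assms(1,2,3) assms(5)[rule_format, of j] _ C0] C by (meson abs_ge_self order_trans)
    then show "sqrt (H_norm_sq R (u j)) \<le> sqrt (4*\<bar>1/\<alpha> - \<kappa>\<bar>*(R^2*((exp(16*\<bar>1/\<alpha> - \<kappa>\<bar>*(\<alpha>^2*C)+2)-1)/\<alpha>) + 4*(\<alpha>^2*C) + 2*R^2))"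
      by (rule real_sqrt_le_mono)
  qed
qed

end
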